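(* Let $\nabla$ be the unique torsionless connection on $\mathcal E$ that is unitary with respect to the canonical metric $g$, and write $\nabla(e_i)=\sum_{j,k=1}^3e_j\otimes e_k\Gamma^i_{jk}$. Then $\Gamma^1_{32}=\Gamma^2_{13}=\Gamma^3_{21}=\tfrac12$, $\Gamma^1_{23}=\Gamma^2_{31}=\Gamma^3_{12}=-\tfrac12$, and all other $\Gamma^i_{jk}$ vanish; that is, $$\nabla(e_1)=\tfrac12(e_3\otimes e_2-e_2\otimes e_3),\ \nabla(e_2)=\tfrac12(e_1\otimes e_3-e_3\otimes e_1),\ \nabla(e_3)=\tfrac12(e_2\otimes e_1-e_1\otimes e_2).$$
   Context: Let $\mathcal O_3$ be the Cuntz algebra with three generators ($S_i^*S_i=1$, $\sum_jS_jS_j^*=1$), $\mathcal A$ the unital $*$-subalgebra generated by $S_1,S_2,S_3$. Let $\partial_1,\partial_2,\partial_3$ be the $*$-derivations of $\mathcal A$ with $\partial_1S_1=0,\ \partial_1S_2=-S_3,\ \partial_1S_3=S_2$; $\partial_2S_1=-S_3,\ \partial_2S_2=0,\ \partial_2S_3=S_1$; $\partial_3S_1=S_2,\ \partial_3S_2=-S_1,\ \partial_3S_3=0$. Let $\mathcal D=\sum_i\partial_i\otimes\sigma_i$ on $L^2(\mathcal O_3,\tau)\otimes\mathbb C^N$ ($\tau$ the KMS state, $\mathcal A$ acting by $a\otimes I$), with $\sigma_i$ mutually anticommuting involutions such that $\{\sigma_i\}$ and $\{I,\sigma_1\sigma_2,\sigma_1\sigma_3,\sigma_2\sigma_3\}$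 are linearly independent. The Connes calculus: $\Omega^k_{\mathcal D}(\mathcal A)=\Pi(\Omega^k(\mathcal A))/\Pi(\delta J_0^{k-1})$ with $\Pi(a_0\delta a_1\cdots\delta a_k)=a_0[\mathcal D,a_1]\cdots[\mathcal D,a_k]$, $J_0^k=\ker\Pi\cap\Omega^k(\mathcal A)$, differential $d$ induced by $\delta$, product $m$ induced by multiplication. $\mathcal E=\Omega^1_{\mathcal D}(\mathcal A)$ is free with basis $e_i=1\otimes\sigma_i$, $ae_i=e_ia$; $m(e_i\otimes e_j)$ = class of $1\otimes\sigma_i\sigma_j$. A connection is a $\mathbb C$-linear $\nabla:\mathcal E\to\mathcal E\otimes_{\mathcal A}\mathcal E$ with $\nabla(\omega a)=\nabla(\omega)a+\omega\otimes da$; torsionless means $m\circ\nabla+d=0$. The canonical metric is the right $\mathcal A$-linear $g$ with $g(e_i\otimes e_ja)=\delta_{ij}a$. Unitarity with respect to $g$ means $\Pi_g(\nabla)=dg$, where $dg,\Pi_g(\nabla):\mathcal E\otimes_{\mathcal A}\mathcal E\to\mathcal E$ are right $\mathcal A$-linear with $dg(e_i\otimes e_j)=d(g(e_i\otimes e_j))$ and $\Pi_g(\nabla)(e_i\otimes e_j)=(g\otimes\mathrm{id})\sigma_{23}(\nabla(e_i)\otimes e_j+\nabla(e_j)\otimes e_i)$, where $\sigma_{23}(e_a\otimes e_b\otimes e_cx)=e_a\otimes e_c\otimes e_bx$ and $(g\otimes\mathrm{id})(e_a\otimes e_b\otimes e_cx)=g(e_a\otimes e_b)e_cx$. (Such a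 $\nabla$ exists and is unique.) *)

theory Defs
  imports "HOL-Analysis.Analysis"
begin

(* Indices 1,2,3 are natural numbers; only values in {1..3} are ever used. *)

section \<open>The algebra A (abstractly: a unital complex *-algebra generated by Cuntz isometries)\<close>

(* sc : scalar embedding C -> A (c |-> c 1);  st : the involution *;  S i : the generators *)
inductive_set gen_alg :: "(complex \<Rightarrow> 'a::ring_1) \<Rightarrow> ('a \<Rightarrow> 'a) \<Rightarrow> (nat \<Rightarrow> 'a) \<Rightarrow> 'a set"
  for sc st S where
  gen_scalar: "sc c \<in> gen_alg sc st S"
| gen_S: "i \<in> {1..3} \<Longrightarrow> S i \<in> gen_alg sc st S"
| gen_Sstar: "i \<in> {1..3} \<Longrightarrow> st (S i) \<in> gen_alg sc st S"
| gen_add: "a \<in> gen_alg sc st S \<Longrightarrow> b \<in> gen_alg sc st S \<Longrightarrow> a + b \<in> gen_alg sc st S"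
| gen_mult: "a \<in> gen_alg sc st S \<Longrightarrow> b \<in> gen_alg sc st S \<Longrightarrow> a * b \<in> gen_alg sc st S"
| gen_star: "a \<in> gen_alg sc st S \<Longrightarrow> st a \<in> gen_alg sc st S"

definition cuntz3_algebra :: "(complex \<Rightarrow> 'a::ring_1) \<Rightarrow> ('a \<Rightarrow> 'a) \<Rightarrow> (nat \<Rightarrow> 'a) \<Rightarrow> bool" where
  "cuntz3_algebra sc st S \<longleftrightarrow>
     \<comment> \<open>complex unital algebra: sc is a unital ring hom onto central scalars\<close>
     (\<forall>x y. sc (x + y) = sc x + sc y) \<and> (\<forall>x y. sc (x * y) = sc x * sc y) \<and> sc 1 = 1 \<and>
     (\<forall>c a. sc c * a = a * sc c) \<and>
     \<comment> \<open>conjugate-linear involutive anti-automorphism\<close>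
     (\<forall>a b. st (a + b) = st a + st b) \<and> (\<forall>a b. st (a * b) = st b * st a) \<and>
     (\<forall>a. st (st a) = a) \<and> (\<forall>c. st (sc c) = sc (cnj c)) \<and>
     \<comment> \<open>Cuntz relations\<close>
     (\<forall>i\<in>{1..3}. st (S i) * S i = 1) \<and>
     S 1 * st (S 1) + S 2 * st (S 2) + S 3 * st (S 3) = 1 \<and>
     \<comment> \<open>A is generated by S1,S2,S3 as a unital *-algebra\<close>
     (\<forall>a. a \<in> gen_alg sc st S)"

definition so3_derivations ::
  "(complex \<Rightarrow> 'a::ring_1) \<Rightarrow> ('a \<Rightarrow> 'a) \<Rightarrow> (nat \<Rightarrow> 'a) \<Rightarrow> (nat \<Rightarrow> 'a \<Rightarrow> 'a) \<Rightarrow> bool" where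
  "so3_derivations sc st S der \<longleftrightarrow>
     (\<forall>i\<in>{1..3}.
        (\<forall>a b. der i (a + b) = der i a + der i b) \<and>
        (\<forall>c. der i (sc c) = 0) \<and>
        (\<forall>a b. der i (a * b) = der i a * b + a * der i b) \<and>
        (\<forall>a. der i (st a) = st (der i a))) \<and>
     der 1 (S 1) = 0 \<and> der 1 (S 2) = - S 3 \<and> der 1 (S 3) = S 2 \<and>
     der 2 (S 1) = - S 3 \<and> der 2 (S 2) = 0 \<and> der 2 (S 3) = S 1 \<and>
     der 3 (S 1) = S 2 \<and> der 3 (S 2) = - S 1 \<and> der 3 (S 3) = 0"

definition clifford3 :: "(nat \<Rightarrow> complex^'n^'n) \<Rightarrow> bool" where
  "clifford3 sig \<longleftrightarrow>
     (\<forall>i\<in>{1..3}. sig i ** sig i = mat 1) \<and>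
     (\<forall>i\<in>{1..3}. \<forall>j\<in>{1..3}. i \<noteq> j \<longrightarrow> sig i ** sig j = - (sig j ** sig i)) \<and>
     (\<forall>c::nat \<Rightarrow> complex. (\<Sum>i\<in>{1..3}. mat (c i) ** sig i) = 0 \<longrightarrow> (\<forall>i\<in>{1..3}. c i = 0)) \<and>
     (\<forall>c0 c12 c13 c23::complex.
        mat c0 + mat c12 ** (sig 1 ** sig 2) + mat c13 ** (sig 1 ** sig 3) + mat c23 ** (sig 2 ** sig 3) = 0
        \<longrightarrow> c0 = 0 \<and> c12 = 0 \<and> c13 = 0 \<and> c23 = 0)"

section \<open>Operators: elements of A (x) M_N(C), i.e. N x N matrices over A\<close>

(* a |-> a (x) I *)
definition emb :: "'a::ring_1 \<Rightarrow> 'a^'n^'n" where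
  "emb a = (\<chi> p q. if p = q then a else 0)"

(* T |-> 1 (x) T *)
definition Cl :: "(complex \<Rightarrow> 'a::ring_1) \<Rightarrow> complex^'n^'n \<Rightarrow> 'a^'n^'n" where
  "Cl sc T = (\<chi> p q. sc (T $ p $ q))"

(* [D, a (x) I] = sum_i der_i(a) (x) sig_i *)
definition Dcomm :: "(complex \<Rightarrow> 'a::ring_1) \<Rightarrow> (nat \<Rightarrow> 'a \<Rightarrow> 'a) \<Rightarrow> (nat \<Rightarrow> complex^'n^'n) \<Rightarrow> 'a \<Rightarrow> 'a^'n^'n" where
  "Dcomm sc der sig a = (\<Sum>i\<in>{1..3}. emb (der i a) ** Cl sc (sig i))"

(* [D,a1] ... [D,ak] *)
fun dprod :: "(complex \<Rightarrow> 'a::ring_1) \<Rightarrow> (nat \<Rightarrow> 'a \<Rightarrow> 'a) \<Rightarrow> (nat \<Rightarrow> complex^'n^'n) \<Rightarrow> 'a list \<Rightarrow> 'a^'n^'n" where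
  "dprod sc der sig [] = mat 1"
| "dprod sc der sig (a # as) = Dcomm sc der sig a ** dprod sc der sig as"

(* Pi(a0 delta a1 ... delta ak) = a0 [D,a1]...[D,ak]; a universal form is a finite sum of such terms,
   represented as a list of lists [a0,...,ak] *)
fun piterm :: "(complex \<Rightarrow> 'a::ring_1) \<Rightarrow> (nat \<Rightarrow> 'a \<Rightarrow> 'a) \<Rightarrow> (nat \<Rightarrow> complex^'n^'n) \<Rightarrow> 'a list \<Rightarrow> 'a^'n^'n" where
  "piterm sc der sig [] = 0"
| "piterm sc der sig (a0 # as) = emb a0 ** dprod sc der sig as"

definition PiForm :: "(complex \<Rightarrow> 'a::ring_1) \<Rightarrow> (nat \<Rightarrow> 'a \<Rightarrow> 'a) \<Rightarrow> (nat \<Rightarrow> complex^'n^'n) \<Rightarrow> 'a list list \<Rightarrow> 'a^'n^'n" where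
  "PiForm sc der sig ts = sum_list (map (piterm sc der sig) ts)"

(* Pi(delta omega) for omega represented by ts *)
definition PiDForm :: "(complex \<Rightarrow> 'a::ring_1) \<Rightarrow> (nat \<Rightarrow> 'a \<Rightarrow> 'a) \<Rightarrow> (nat \<Rightarrow> complex^'n^'n) \<Rightarrow> 'a list list \<Rightarrow> 'a^'n^'n" where
  "PiDForm sc der sig ts = sum_list (map (dprod sc der sig) ts)"

definition PiOmega :: "(complex \<Rightarrow> 'a::ring_1) \<Rightarrow> (nat \<Rightarrow> 'a \<Rightarrow> 'a) \<Rightarrow> (nat \<Rightarrow> complex^'n^'n) \<Rightarrow> nat \<Rightarrow> ('a^'n^'n) set" where
  "PiOmega sc der sig k = {PiForm sc der sig ts | ts. \<forall>t\<in>set ts. length t = k + 1}"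

(* Pi(delta J_0^{k-1}),  k >= 1 *)
definition Junk :: "(complex \<Rightarrow> 'a::ring_1) \<Rightarrow> (nat \<Rightarrow> 'a \<Rightarrow> 'a) \<Rightarrow> (nat \<Rightarrow> complex^'n^'n) \<Rightarrow> nat \<Rightarrow> ('a^'n^'n) set" where
  "Junk sc der sig k = {PiDForm sc der sig ts | ts. (\<forall>t\<in>set ts. length t = k) \<and> PiForm sc der sig ts = 0}"

section \<open>E = Omega^1_D and the connection in the basis e_i\<close>

(* E = Omega^1_D = Pi(Omega^1(A))  (the junk Pi(delta J_0^0) is zero) *)
definition Eforms :: "(complex \<Rightarrow> 'a::ring_1) \<Rightarrow> (nat \<Rightarrow> 'a \<Rightarrow> 'a) \<Rightarrow> (nat \<Rightarrow> complex^'n^'n) \<Rightarrow> ('a^'n^'n) set" where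
  "Eforms sc der sig = PiOmega sc der sig 1"

definition ebase :: "(complex \<Rightarrow> 'a::ring_1) \<Rightarrow> (nat \<Rightarrow> complex^'n^'n) \<Rightarrow> nat \<Rightarrow> 'a^'n^'n" where
  "ebase sc sig i = Cl sc (sig i)"

(* Elements of E (x)_A E are written  sum_{j,k} e_j (x) e_k c_jk  and represented by c :: nat => nat => 'a
   (E is free with central basis e_i); similarly for E (x) E (x) E and for E itself. *)

definition is_connection ::
  "(complex \<Rightarrow> 'a::ring_1) \<Rightarrow> (nat \<Rightarrow> 'a \<Rightarrow> 'a) \<Rightarrow> (nat \<Rightarrow> complex^'n^'n)
   \<Rightarrow> ('a^'n^'n \<Rightarrow> nat \<Rightarrow> nat \<Rightarrow> 'a) \<Rightarrow> bool" where
  "is_connection sc der sig nab \<longleftrightarrow>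
     (\<forall>\<omega>\<in>Eforms sc der sig. \<forall>\<eta>\<in>Eforms sc der sig. \<forall>j\<in>{1..3}. \<forall>k\<in>{1..3}.
        nab (\<omega> + \<eta>) j k = nab \<omega> j k + nab \<eta> j k) \<and>
     (\<forall>\<omega>\<in>Eforms sc der sig. \<forall>c. \<forall>j\<in>{1..3}. \<forall>k\<in>{1..3}.
        nab (emb (sc c) ** \<omega>) j k = sc c * nab \<omega> j k) \<and>
     \<comment> \<open>Leibniz rule nabla(omega a) = nabla(omega) a + omega (x) da, with omega = sum_j e_j w_j
         and da = [D,a] = sum_k e_k der_k(a)\<close>
     (\<forall>\<omega>\<in>Eforms sc der sig. \<forall>w a. \<omega> = (\<Sum>j\<in>{1..3}. ebase sc sig j ** emb (w j)) \<longrightarrow>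
        (\<forall>j\<in>{1..3}. \<forall>k\<in>{1..3}. nab (\<omega> ** emb a) j k = nab \<omega> j k * a + w j * der k a))"

(* m(sum e_j (x) e_k c_jk) represented by sum (1 (x) sig_j sig_k)(c_jk (x) 1) *)
definition mult2 :: "(complex \<Rightarrow> 'a::ring_1) \<Rightarrow> (nat \<Rightarrow> complex^'n^'n) \<Rightarrow> (nat \<Rightarrow> nat \<Rightarrow> 'a) \<Rightarrow> 'a^'n^'n" where
  "mult2 sc sig c = (\<Sum>j\<in>{1..3}. \<Sum>k\<in>{1..3}. Cl sc (sig j ** sig k) ** emb (c j k))"

(* m o nabla + d = 0 as maps E -> Omega^2_D = Pi(Omega^2)/Pi(delta J_0^1):
   for omega = Pi(sum a0 delta a1), d omega is the class of Pi(sum delta a0 delta a1) *)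
definition torsionless ::
  "(complex \<Rightarrow> 'a::ring_1) \<Rightarrow> (nat \<Rightarrow> 'a \<Rightarrow> 'a) \<Rightarrow> (nat \<Rightarrow> complex^'n^'n)
   \<Rightarrow> ('a^'n^'n \<Rightarrow> nat \<Rightarrow> nat \<Rightarrow> 'a) \<Rightarrow> bool" where
  "torsionless sc der sig nab \<longleftrightarrow>
     (\<forall>ts. (\<forall>t\<in>set ts. length t = 2) \<longrightarrow>
        mult2 sc sig (nab (PiForm sc der sig ts)) + PiDForm sc der sig ts \<in> Junk sc der sig 2)"

(* canonical metric: g(e_a (x) e_b x) = delta_ab x *)
definition gcan :: "nat \<Rightarrow> nat \<Rightarrow> 'a::ring_1" where
  "gcan a b = (if a = b then 1 else 0)"

(* coefficients of (sum e_a (x) e_b c_ab) (x) e_j *)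
definition tens_e :: "(nat \<Rightarrow> nat \<Rightarrow> 'a::ring_1) \<Rightarrow> nat \<Rightarrow> nat \<Rightarrow> nat \<Rightarrow> nat \<Rightarrow> 'a" where
  "tens_e c j = (\<lambda>a b l. if l = j then c a b else 0)"

definition sigma23 :: "(nat \<Rightarrow> nat \<Rightarrow> nat \<Rightarrow> 'a) \<Rightarrow> nat \<Rightarrow> nat \<Rightarrow> nat \<Rightarrow> 'a" where
  "sigma23 T = (\<lambda>a b c. T a c b)"

(* (g (x) id)(e_a (x) e_b (x) e_c x) = g(e_a (x) e_b) e_c x; result in coordinates of E *)
definition g_id :: "(nat \<Rightarrow> nat \<Rightarrow> nat \<Rightarrow> 'a::ring_1) \<Rightarrow> nat \<Rightarrow> 'a" where
  "g_id T = (\<lambda>c. \<Sum>a\<in>{1..3}. \<Sum>b\<in>{1..3}. gcan a b * T a b c)"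

(* Pi_g(nabla)(e_i (x) e_j) in coordinates of E *)
definition Pi_g ::
  "(complex \<Rightarrow> 'a::ring_1) \<Rightarrow> (nat \<Rightarrow> complex^'n^'n) \<Rightarrow> ('a^'n^'n \<Rightarrow> nat \<Rightarrow> nat \<Rightarrow> 'a) \<Rightarrow> nat \<Rightarrow> nat \<Rightarrow> nat \<Rightarrow> 'a" where
  "Pi_g sc sig nab i j = g_id (sigma23 (\<lambda>a b c.
       tens_e (nab (ebase sc sig i)) j a b c + tens_e (nab (ebase sc sig j)) i a b c))"

(* dg(e_i (x) e_j) = d(g(e_i (x) e_j)) = [D, g_ij] = sum_k e_k der_k(g_ij), in coordinates *)
definition dg :: "(nat \<Rightarrow> 'a \<Rightarrow> 'a) \<Rightarrow> nat \<Rightarrow> nat \<Rightarrow> nat \<Rightarrow> 'a::ring_1" where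
  "dg der i j = (\<lambda>k. der k (gcan i j))"

(* both sides are right A-linear, so equality on the basis e_i (x) e_j suffices *)
definition unitary ::
  "(complex \<Rightarrow> 'a::ring_1) \<Rightarrow> (nat \<Rightarrow> 'a \<Rightarrow> 'a) \<Rightarrow> (nat \<Rightarrow> complex^'n^'n)
   \<Rightarrow> ('a^'n^'n \<Rightarrow> nat \<Rightarrow> nat \<Rightarrow> 'a) \<Rightarrow> bool" where
  "unitary sc der sig nab \<longleftrightarrow>
     (\<forall>i\<in>{1..3}. \<forall>j\<in>{1..3}. \<forall>k\<in>{1..3}. Pi_g sc sig nab i j k = dg der i j k)"

definition Gamma0 :: "nat \<Rightarrow> nat \<Rightarrow> nat \<Rightarrow> complex" where
  "Gamma0 i j k =
     (if (i, j, k) \<in> {(1,3,2), (2,1,3), (3,2,1)} then 1/2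
      else if (i, j, k) \<in> {(1,2,3), (2,3,1), (3,1,2)} then - 1/2
      else 0)"

end

theory Submission
  imports Defs
begin

lemma mm_rdistrib: "((A::'b::semiring_1^'n^'m) + B) ** C = A ** C + B ** C"
  by (simp add: vec_eq_iff matrix_matrix_mult_def distrib_right sum.distrib)

lemma mm_sum_left: "(\<Sum>i\<in>I. f i) ** (M::'b::semiring_1^'n^'m) = (\<Sum>i\<in>I. f i ** M)"
  by (induction I rule: infinite_finite_induct) (auto simp: mm_rdistrib)

lemma mm_sum_right: "(M::'b::semiring_1^'n^'m) ** (\<Sum>i\<in>I. f i) = (\<Sum>i\<in>I. M ** f i)"
  by (induction I rule: infinite_finite_induct) (auto simp: matrix_add_ldistrib)

lemma emb_mult: "emb a ** emb b = (emb (a * b) :: 'b::ring_1^'n^'n)"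
proof -
  have "(\<Sum>k\<in>UNIV. (if p = k then a else 0) * (if k = q then b else 0)) = (if p = q then a * b else 0)" for p q :: 'n
  proof -
    have "(\<Sum>k\<in>UNIV. (if p = k then a else 0) * (if k = q then b else 0)) = (\<Sum>k\<in>UNIV. if k = p then a * (if k = q then b else 0) else 0)"
      by (rule sum.cong) auto
    also have "\<dots> = a * (if p = q then b else 0)" by (simp add: sum.delta)
    finally show ?thesis by simp
  qed
  thus ?thesis by (simp add: vec_eq_iff emb_def matrix_matrix_mult_def)
qed

lemma emb_1: "emb 1 = (mat 1 :: 'b::ring_1^'n^'n)"
  by (simp add: emb_def mat_def)

lemma emb_0: "emb 0 = (0 :: 'b::ring_1^'n^'n)"
  by (simp add: emb_def vec_eq_iff)

lemma emb_add: "emb (a + b) = (emb a + emb b :: 'b::ring_1^'n^'n)"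
  by (simp add: emb_def vec_eq_iff)

lemma emb_sum: "emb (\<Sum>i\<in>I. f i) = (\<Sum>i\<in>I. emb (f i) :: 'b::ring_1^'n^'n)"
  by (induction I rule: infinite_finite_induct) (auto simp: emb_add emb_0)

lemma mm_neg_left: "(- (A::'b::ring_1^'n^'m)) ** B = - (A ** B)"
  by (simp add: vec_eq_iff matrix_matrix_mult_def sum_negf)
lemma mm_neg_right: "(A::'b::ring_1^'n^'m) ** (- B) = - (A ** B)"
  by (simp add: vec_eq_iff matrix_matrix_mult_def sum_negf)
lemma trace_neg: "trace (- (A::'b::ring_1^'n^'n)) = - trace A"
  by (simp add: trace_def sum_negf)

locale cz =
  fixes sc :: "complex \<Rightarrow> 'a::ring_1" and st :: "'a \<Rightarrow> 'a" and S :: "nat \<Rightarrow> 'a"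
    and der :: "nat \<Rightarrow> 'a \<Rightarrow> 'a" and sig :: "nat \<Rightarrow> complex^'n::finite^'n"
  assumes A: "cuntz3_algebra sc st S" and D: "so3_derivations sc st S der" and C: "clifford3 sig"
begin

declare One_nat_def[simp del]

lemma sc_add: "sc (x + y) = sc x + sc y" using A unfolding cuntz3_algebra_def by blast
lemma sc_mult: "sc (x * y) = sc x * sc y" using A unfolding cuntz3_algebra_def by blast
lemma sc_1[simp]: "sc 1 = 1" using A unfolding cuntz3_algebra_def by blast
lemma sc_central: "sc c * a = a * sc c" using A unfolding cuntz3_algebra_def by blast
lemma sc_0[simp]: "sc 0 = 0" using sc_add[of 0 0] by simp
lemma sc_neg: "sc (- x) = - sc x" using sc_add[of x "-x"] by (simp add: eq_neg_iff_add_eq_0 add.commute)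
lemma sc_diff: "sc (x - y) = sc x - sc y" using sc_add[of x "-y"] by (simp add: sc_neg)
lemma sc_sum: "sc (sum f I) = sum (\<lambda>i. sc (f i)) I"
  by (induction I rule: infinite_finite_induct) (auto simp: sc_add)
lemma sc_of_nat: "sc (of_nat n) = of_nat n"
  by (induction n) (auto simp: sc_add)
lemma sc_numeral: "sc (numeral n) = numeral n"
  using sc_of_nat[of "numeral n"] by simp
lemma sc_inv: "c \<noteq> 0 \<Longrightarrow> sc c * sc (1/c) = 1" by (simp flip: sc_mult)
lemma sc_inv2: "c \<noteq> 0 \<Longrightarrow> sc (1/c) * sc c = 1" by (simp flip: sc_mult)

lemma st_add: "st (a + b) = st a + st b" using A unfolding cuntz3_algebra_def by blast
lemma st_mult: "st (a * b) = st b * st a" using A unfolding cuntz3_algebra_def by blast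
lemma st_st[simp]: "st (st a) = a" using A unfolding cuntz3_algebra_def by blast
lemma st_0[simp]: "st 0 = 0" using st_add[of 0 0] by simp
lemma st_neg: "st (- x) = - st x" using st_add[of x "-x"] by (simp add: eq_neg_iff_add_eq_0 add.commute)
lemma st_diff: "st (x - y) = st x - st y" using st_add[of x "-y"] by (simp add: st_neg)
lemma SS: "i \<in> {1..3} \<Longrightarrow> st (S i) * S i = 1" using A unfolding cuntz3_algebra_def by blast
lemma Ssum: "S 1 * st (S 1) + S 2 * st (S 2) + S 3 * st (S 3) = 1" using A unfolding cuntz3_algebra_def by blast
lemma gen: "a \<in> gen_alg sc st S" using A unfolding cuntz3_algebra_def by blast

lemma der_add: "i \<in> {1..3} \<Longrightarrow> der i (a + b) = der i a + der i b" using D unfolding so3_derivations_def by blast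
lemma der_sc: "i \<in> {1..3} \<Longrightarrow> der i (sc c) = 0" using D unfolding so3_derivations_def by blast
lemma der_mult: "i \<in> {1..3} \<Longrightarrow> der i (a * b) = der i a * b + a * der i b" using D unfolding so3_derivations_def by blast
lemma der_st: "i \<in> {1..3} \<Longrightarrow> der i (st a) = st (der i a)" using D unfolding so3_derivations_def by blast
lemma der_0: "i \<in> {1..3} \<Longrightarrow> der i 0 = 0" using der_sc[of i 0] by simp
lemma der_1: "i \<in> {1..3} \<Longrightarrow> der i 1 = 0" using der_sc[of i 1] by simp
lemma der_neg: "i \<in> {1..3} \<Longrightarrow> der i (- a) = - der i a"
  using der_add[of i a "-a"] der_0[of i] by (simp add: eq_neg_iff_add_eq_0 add.commute)
lemma der_diff: "i \<in> {1..3} \<Longrightarrow> der i (a - b) = der i a - der i b"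
  using der_add[of i a "-b"] by (simp add: der_neg)
lemma derS: "der 1 (S 1) = 0" "der 1 (S 2) = - S 3" "der 1 (S 3) = S 2"
     "der 2 (S 1) = - S 3" "der 2 (S 2) = 0" "der 2 (S 3) = S 1"
     "der 3 (S 1) = S 2" "der 3 (S 2) = - S 1" "der 3 (S 3) = 0"
  using D unfolding so3_derivations_def by blast+

lemma two_cancel: "(x::'a) + x = 0 \<Longrightarrow> x = 0"
proof -
  assume h: "x + x = 0"
  have "x = sc (1/2) * sc 2 * x" by (simp add: sc_inv2)
  also have "\<dots> = sc (1/2) * (x + x)" by (simp add: sc_numeral algebra_simps mult_2)
  finally show ?thesis using h by simp
qed

lemma set3: "{1..3::nat} = {1,2,3}" by auto
lemma sum3: "(\<Sum>i\<in>{1..3::nat}. f i) = f 1 + f 2 + f 3"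
  by (simp add: set3 add.assoc)

lemma in3: "(1::nat) \<in> {1..3}" "(2::nat) \<in> {1..3}" "(3::nat) \<in> {1..3}" by auto

lemma gl: "(x::'b::ab_group_add) = x + x + y \<Longrightarrow> x = - y"
  by (metis add.assoc add_cancel_right_right eq_neg_iff_add_eq_0)

lemma Qprod: "st (S i) * S j = st (S i) * S 1 * (st (S 1) * S j) + st (S i) * S 2 * (st (S 2) * S j) + st (S i) * S 3 * (st (S 3) * S j)"
proof -
  have "st (S i) * S j = st (S i) * (S 1 * st (S 1) + S 2 * st (S 2) + S 3 * st (S 3)) * S j"
    by (simp only: Ssum mult_1_right)
  thus ?thesis by (simp only: distrib_left distrib_right mult.assoc)
qed

lemma negsum: "(u::'b::ab_group_add) + v = 0 \<Longrightarrow> v = - u"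
  by (metis add.commute eq_neg_iff_add_eq_0)

lemma orth: "i \<in> {1..3} \<Longrightarrow> j \<in> {1..3} \<Longrightarrow> st (S i) * S j = (if i = j then 1 else 0)"
proof -
  define Q where "Q i j = st (S i) * S j" for i j
  have d: "Q i i = 1" if "i \<in> {1..3}" for i using SS[OF that] Q_def by simp
  have q11: "Q 1 1 = 1" and q22: "Q 2 2 = 1" and q33: "Q 3 3 = 1" using d in3 by auto
  have a21: "Q 2 1 = - Q 1 2"
  proof -
    have "der 3 (st (S 1) * S 1) = 0" using SS[OF in3(1)] der_1[OF in3(3)] by simp
    hence "st (S 1) * S 2 + st (S 2) * S 1 = 0"
      by (simp only: der_mult[OF in3(3)] der_st[OF in3(3)] derS add.commute)
    thus ?thesis unfolding Q_def by (rule negsum)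
  qed
  have a31: "Q 3 1 = - Q 1 3"
  proof -
    have "der 2 (st (S 1) * S 1) = 0" using SS[OF in3(1)] der_1[OF in3(2)] by simp
    hence "st (- S 3) * S 1 + st (S 1) * (- S 3) = 0"
      by (simp only: der_mult[OF in3(2)] der_st[OF in3(2)] derS)
    hence "- (st (S 1) * S 3 + st (S 3) * S 1) = 0" by (simp only: st_neg mult_minus_left mult_minus_right minus_add add.commute)
    hence "st (S 1) * S 3 + st (S 3) * S 1 = 0" by (metis neg_equal_0_iff_equal)
    thus ?thesis unfolding Q_def by (rule negsum)
  qed
  have a32: "Q 3 2 = - Q 2 3"
  proof -
    have "der 1 (st (S 2) * S 2) = 0" using SS[OF in3(2)] der_1[OF in3(1)] by simp
    hence "st (- S 3) * S 2 + st (S 2) * (- S 3) = 0"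
      by (simp only: der_mult[OF in3(1)] der_st[OF in3(1)] derS)
    hence "- (st (S 2) * S 3 + st (S 3) * S 2) = 0" by (simp only: st_neg mult_minus_left mult_minus_right minus_add add.commute)
    hence "st (S 2) * S 3 + st (S 3) * S 2 = 0" by (metis neg_equal_0_iff_equal)
    thus ?thesis unfolding Q_def by (rule negsum)
  qed
  have P: "Q i j = Q i 1 * Q 1 j + Q i 2 * Q 2 j + Q i 3 * Q 3 j" for i j
    unfolding Q_def using Qprod[of i j] by (simp only: mult.assoc)
  define a where "a = Q 1 2"
  define b where "b = Q 1 3"
  define c where "c = Q 2 3"
  have "a = a + a + b * (- c)" using P[of 1 2] q11 q22 a32 unfolding a_def b_def c_def by simp
  hence e12: "a = b * c" by (drule_tac gl) simp
  have "b = b + b + a * c" using P[of 1 3] q11 q33 unfolding a_def b_def c_def by (simp add: add.commute add.left_commute)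
  hence e13: "b = - (a * c)" by (rule gl)
  have "c = c + c + (- a) * b" using P[of 2 3] q22 q33 a21 unfolding a_def b_def c_def by (simp add: add.commute add.left_commute)
  hence e23: "c = a * b" by (drule_tac gl) simp
  have "1 = 1 + (- a) * a + (- b) * b" using P[of 1 1] q11 a21 a31 unfolding a_def b_def c_def
    by (simp add: add.commute add.left_commute)
  hence f1: "a * a + b * b = 0" by (simp add: add.assoc flip: neg_eq_iff_add_eq_0)
  have "1 = (- a) * a + 1 + (- c) * c" using P[of 2 2] q22 a21 a32 unfolding a_def b_def c_def
    by (simp add: add.commute add.left_commute)
  hence f2: "a * a + c * c = 0" by (simp add: add.assoc add.left_commute flip: neg_eq_iff_add_eq_0)
  have "1 = (- b) * b + (- c) * c + 1" using P[of 3 3] q33 a31 a32 unfolding a_def b_def c_def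
    by (simp add: add.commute add.left_commute)
  hence f3: "b * b + c * c = 0" by (simp add: add.assoc add.left_commute flip: neg_eq_iff_add_eq_0)
  have "c * c + c * c = (a * a + c * c) + (b * b + c * c) - (a * a + b * b)" by (simp add: algebra_simps)
  hence "c * c + c * c = 0" using f1 f2 f3 by simp
  hence cc: "c * c = 0" by (rule two_cancel)
  have "a = - (a * c * c)" using e12 e13 by (simp add: mult.assoc)
  hence a0: "a = 0" using cc by (simp add: mult.assoc)
  have b0: "b = 0" using e13 a0 by simp
  have c0: "c = 0" using e23 a0 by simp
  assume "i \<in> {1..3}" "j \<in> {1..3}"
  hence "i \<in> {1,2,3}" "j \<in> {1,2,3}" by auto
  thus ?thesis using a0 b0 c0 q11 q22 q33 a21 a31 a32 unfolding a_def b_def c_def Q_def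
    by auto
qed

lemma comm_gen:
  assumes j: "j \<in> {1..3}" and k: "k \<in> {1..3}" and l: "l \<in> {1..3}"
    and g: "\<And>i. i \<in> {1..3} \<Longrightarrow> der j (der k (S i)) - der k (der j (S i)) + der l (S i) = 0"
  shows "der j (der k a) - der k (der j a) + der l a = 0"
proof -
  define Dc where "Dc a = der j (der k a) - der k (der j a) + der l a" for a
  have stc: "Dc (st a) = st (Dc a)" for a
    unfolding Dc_def using der_st[OF j] der_st[OF k] der_st[OF l] by (simp add: st_add st_diff)
  have "a \<in> gen_alg sc st S" by (rule gen)
  hence "Dc a = 0"
  proof (induction a rule: gen_alg.induct)
    case (gen_scalar c) thus ?case unfolding Dc_def using j k l by (simp add: der_sc der_0)
  next
    case (gen_S i) thus ?case using g unfolding Dc_def by blast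
  next
    case (gen_Sstar i) thus ?case using g stc unfolding Dc_def by (metis st_0)
  next
    case (gen_add a b) thus ?case unfolding Dc_def using j k l by (simp add: der_add algebra_simps)
  next
    case (gen_mult a b)
    have "Dc (a * b) = Dc a * b + a * Dc b" unfolding Dc_def using j k l
      by (simp add: der_mult der_add algebra_simps)
    thus ?case using gen_mult by simp
  next
    case (gen_star a) thus ?case using stc by simp
  qed
  thus ?thesis unfolding Dc_def .
qed

lemma comm:
  "der 1 (der 2 a) - der 2 (der 1 a) + der 3 a = 0"
  "der 2 (der 3 a) - der 3 (der 2 a) + der 1 a = 0"
  "der 3 (der 1 a) - der 1 (der 3 a) + der 2 a = 0"
proof -
  have ds: "\<And>i x. i \<in> {1..3} \<Longrightarrow> der i (- x) = - der i x" by (rule der_neg)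
  show "der 1 (der 2 a) - der 2 (der 1 a) + der 3 a = 0"
    by (rule comm_gen) (auto simp: set3 derS ds der_0 in3)
  show "der 2 (der 3 a) - der 3 (der 2 a) + der 1 a = 0"
    by (rule comm_gen) (auto simp: set3 derS ds der_0 in3)
  show "der 3 (der 1 a) - der 1 (der 3 a) + der 2 a = 0"
    by (rule comm_gen) (auto simp: set3 derS ds der_0 in3)
qed

lemma Cl_mult: "Cl sc T ** Cl sc U = Cl sc (T ** U)"
  by (simp add: vec_eq_iff Cl_def matrix_matrix_mult_def sc_sum sc_mult)

lemma Cl_emb_entry: "(Cl sc T ** emb a) $ p $ q = sc (T $ p $ q) * a"
proof -
  have "(\<Sum>k\<in>UNIV. sc (T $ p $ k) * (if k = q then a else 0)) = (\<Sum>k\<in>UNIV. if k = q then sc (T $ p $ k) * a else 0)"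
    by (rule sum.cong) auto
  thus ?thesis by (simp add: emb_def Cl_def matrix_matrix_mult_def sum.delta')
qed

lemma emb_Cl_entry: "(emb a ** Cl sc T) $ p $ q = a * sc (T $ p $ q)"
proof -
  have "(\<Sum>k\<in>UNIV. (if p = k then a else 0) * sc (T $ k $ q)) = (\<Sum>k\<in>UNIV. if k = p then a * sc (T $ k $ q) else 0)"
    by (rule sum.cong) auto
  thus ?thesis by (simp add: emb_def Cl_def matrix_matrix_mult_def sum.delta)
qed

lemma Cl_emb: "Cl sc T ** emb a = emb a ** Cl sc T"
  unfolding vec_eq_iff Cl_emb_entry emb_Cl_entry by (metis sc_central)

lemma trace_add': "trace ((X::'b::semiring_1^'n^'n) + Y) = trace X + trace Y"
  by (simp add: trace_def sum.distrib)

lemma trace_sum: "trace (\<Sum>i\<in>I. f i) = (\<Sum>i\<in>I. trace (f i :: 'b::semiring_1^'n^'n))"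
  unfolding trace_def sum_component by (rule sum.swap)

lemma trace_embCl: "trace (emb x ** Cl sc U) = x * sc (trace U)"
  by (simp add: trace_def emb_Cl_entry sc_sum sum_distrib_left)

definition F :: "complex^'n^'n \<Rightarrow> 'a^'n^'n \<Rightarrow> 'a" where
  "F T X = trace (X ** Cl sc T)"

lemma F_add: "F T (X + Y) = F T X + F T Y"
  by (simp add: F_def mm_rdistrib trace_add')

lemma F_sum: "F T (\<Sum>i\<in>I. f i) = (\<Sum>i\<in>I. F T (f i))"
  by (simp add: F_def mm_sum_left trace_sum)

lemma F_embCl: "F T (emb x ** Cl sc U) = x * sc (trace (U ** T))"
  by (simp add: F_def trace_embCl Cl_mult flip: matrix_mul_assoc)

lemma F_Clemb: "F T (Cl sc U ** emb x) = x * sc (trace (U ** T))"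
  by (simp add: Cl_emb F_embCl)

lemma Dcomm_eq: "Dcomm sc der sig a = (\<Sum>i\<in>{1..3}. emb (der i a) ** Cl sc (sig i))"
  by (simp add: Dcomm_def)

lemma piterm2: "piterm sc der sig [a0, a1] = (\<Sum>m\<in>{1..3}. emb (a0 * der m a1) ** Cl sc (sig m))"
  by (simp add: Dcomm_def mm_sum_right matrix_mul_assoc emb_mult)

lemma dprod2: "dprod sc der sig [a0, a1] = (\<Sum>l\<in>{1..3}. \<Sum>m\<in>{1..3}. emb (der l a0 * der m a1) ** Cl sc (sig l ** sig m))"
proof -
  have "dprod sc der sig [a0, a1] = (\<Sum>l\<in>{1..3}. emb (der l a0) ** Cl sc (sig l)) ** (\<Sum>m\<in>{1..3}. emb (der m a1) ** Cl sc (sig m))"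
    by (simp add: Dcomm_def)
  also have "\<dots> = (\<Sum>l\<in>{1..3}. \<Sum>m\<in>{1..3}. (emb (der l a0) ** Cl sc (sig l)) ** (emb (der m a1) ** Cl sc (sig m)))"
    by (subst mm_sum_left) (simp add: mm_sum_right)
  also have "\<dots> = (\<Sum>l\<in>{1..3}. \<Sum>m\<in>{1..3}. emb (der l a0 * der m a1) ** Cl sc (sig l ** sig m))"
  proof -
    have "(emb x ** Cl sc U) ** (emb y ** Cl sc V) = emb (x * y) ** Cl sc (U ** V)" for x y and U V :: "complex^'n^'n"
    proof -
      have "(emb x ** Cl sc U) ** (emb y ** Cl sc V) = emb x ** (Cl sc U ** emb y) ** Cl sc V"
        by (simp add: matrix_mul_assoc)
      also have "\<dots> = emb x ** emb y ** (Cl sc U ** Cl sc V)"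
        by (simp add: Cl_emb matrix_mul_assoc)
      finally show ?thesis by (simp add: emb_mult Cl_mult)
    qed
    thus ?thesis by simp
  qed
  finally show ?thesis .
qed


lemma sq: "i \<in> {1..3} \<Longrightarrow> sig i ** sig i = mat 1" using C unfolding clifford3_def by blast
lemma ac: "i \<in> {1..3} \<Longrightarrow> j \<in> {1..3} \<Longrightarrow> i \<noteq> j \<Longrightarrow> sig i ** sig j = - (sig j ** sig i)"
  using C unfolding clifford3_def by blast

lemma tr2: "i \<in> {1..3} \<Longrightarrow> j \<in> {1..3} \<Longrightarrow> trace (sig i ** sig j) = (if i = j then (of_nat CARD('n) :: complex) else 0)"
proof -
  assume i: "i \<in> {1..3}" and j: "j \<in> {1..3}"
  show ?thesis
  proof (cases "i = j")
    case True thus ?thesis using sq[OF i] by (simp add: trace_I)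
  next
    case False
    have "trace (sig i ** sig j) = trace (sig j ** sig i)" by (rule trace_mul_sym)
    also have "\<dots> = - trace (sig i ** sig j)" using ac[OF j i] False by (simp add: trace_neg)
    finally have "trace (sig i ** sig j) = 0" by simp
    thus ?thesis using False by simp
  qed
qed

lemma tr4: assumes a: "a \<in> {1..3}" and b: "b \<in> {1..3}" and c: "c \<in> {1..3}" and d: "d \<in> {1..3}"
  shows "trace (sig a ** sig b ** sig c ** sig d) =
    (of_nat CARD('n) :: complex) * ((if a = b \<and> c = d then 1 else 0) - (if a = c \<and> b = d then 1 else 0) + (if a = d \<and> b = c then 1 else 0))"
proof -
  note as = matrix_mul_assoc
  consider "c = d" | "c \<noteq> d" "b = c" | "c \<noteq> d" "b \<noteq> c" "b = d" | "c \<noteq> d" "b \<noteq> c" "b \<noteq> d" by blast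
  thus ?thesis
  proof cases
    case 1
    have "sig a ** sig b ** sig c ** sig d = sig a ** sig b" using sq[OF c] 1 by (simp flip: as)
    thus ?thesis using tr2[OF a b] 1 by auto
  next
    case 2
    have "sig a ** sig b ** sig c ** sig d = sig a ** sig d" using sq[OF b] 2 by (simp add: as[of "sig a" "sig c" "sig c", symmetric])
    thus ?thesis using tr2[OF a d] 2 by auto
  next
    case 3
    have "sig a ** sig b ** sig c ** sig d = sig a ** sig b ** (sig c ** sig b)" using 3 by (simp flip: as)
    also have "\<dots> = - (sig a ** (sig b ** sig b) ** sig c)" using ac[OF c b] 3 by (simp add: mm_neg_right as)
    also have "\<dots> = - (sig a ** sig c)" using sq[OF b] by simp
    finally show ?thesis using tr2[OF a c] 3 by (auto simp: trace_neg)
  next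
    case 4
    have "a = b \<or> a = c \<or> a = d" using a b c d 4 by auto
    moreover
    { assume ab: "a = b"
      have "sig a ** sig b ** sig c ** sig d = sig c ** sig d" using sq[OF b] ab by simp
      hence ?thesis using tr2[OF c d] 4 ab by auto }
    moreover
    { assume ac': "a = c"
      have "sig a ** sig b ** sig c ** sig d = (sig c ** sig b) ** sig c ** sig d" using ac' by simp
      also have "\<dots> = - (sig b ** (sig c ** sig c) ** sig d)" using ac[OF c b] 4 by (simp add: mm_neg_left as)
      also have "\<dots> = - (sig b ** sig d)" using sq[OF c] by simp
      finally have ?thesis using tr2[OF b d] 4 ac' by (auto simp: trace_neg) }
    moreover
    { assume ad: "a = d"
      have "trace (sig a ** sig b ** sig c ** sig d) = trace (sig d ** (sig b ** sig c ** sig d))" using ad by (simp add: as)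
      also have "\<dots> = trace ((sig b ** sig c ** sig d) ** sig d)" by (rule trace_mul_sym)
      also have "\<dots> = trace (sig b ** sig c)" using sq[OF d] by (simp flip: as)
      finally have ?thesis using tr2[OF b c] 4 ad by auto }
    ultimately show ?thesis by blast
  qed
qed

definition yv :: "'a list list \<Rightarrow> nat \<Rightarrow> 'a" where
  "yv ts m = sum_list (map (\<lambda>t. hd t * der m (t ! 1)) ts)"
definition zv :: "'a list list \<Rightarrow> nat \<Rightarrow> nat \<Rightarrow> 'a" where
  "zv ts l m = sum_list (map (\<lambda>t. der l (hd t) * der m (t ! 1)) ts)"
definition wv :: "'a list list \<Rightarrow> nat \<Rightarrow> nat \<Rightarrow> 'a" where
  "wv ts l m = sum_list (map (\<lambda>t. hd t * der l (der m (t ! 1))) ts)"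

lemma len2: "length t = 2 \<Longrightarrow> t = [hd t, t ! 1]"
  by (cases t; cases "tl t") auto

lemma PiForm_rep: "(\<forall>t\<in>set ts. length t = 2) \<Longrightarrow>
   PiForm sc der sig ts = (\<Sum>m\<in>{1..3}. emb (yv ts m) ** Cl sc (sig m))"
proof (induction ts)
  case Nil thus ?case by (simp add: PiForm_def yv_def emb_0)
next
  case (Cons t ts)
  have t: "t = [hd t, t ! 1]" using Cons.prems by (intro len2) simp
  have "PiForm sc der sig (t # ts) = piterm sc der sig t + PiForm sc der sig ts"
    by (simp add: PiForm_def)
  also have "piterm sc der sig t = (\<Sum>m\<in>{1..3}. emb (hd t * der m (t ! 1)) ** Cl sc (sig m))"
    by (subst t) (rule piterm2)
  finally show ?case using Cons by (simp add: yv_def emb_add mm_rdistrib sum.distrib)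
qed

lemma PiDForm_rep: "(\<forall>t\<in>set ts. length t = 2) \<Longrightarrow>
   PiDForm sc der sig ts = (\<Sum>l\<in>{1..3}. \<Sum>m\<in>{1..3}. emb (zv ts l m) ** Cl sc (sig l ** sig m))"
proof (induction ts)
  case Nil thus ?case by (simp add: PiDForm_def zv_def emb_0)
next
  case (Cons t ts)
  have t: "t = [hd t, t ! 1]" using Cons.prems by (intro len2) simp
  have "PiDForm sc der sig (t # ts) = dprod sc der sig t + PiDForm sc der sig ts"
    by (simp add: PiDForm_def)
  also have "dprod sc der sig t = (\<Sum>l\<in>{1..3}. \<Sum>m\<in>{1..3}. emb (der l (hd t) * der m (t ! 1)) ** Cl sc (sig l ** sig m))"
    by (subst t) (rule dprod2)
  finally show ?case using Cons by (simp add: zv_def emb_add mm_rdistrib sum.distrib)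
qed

lemma F1: "k \<in> {1..3} \<Longrightarrow> F (sig k) (\<Sum>m\<in>{1..3}. emb (v m) ** Cl sc (sig m)) = v k * sc (of_nat CARD('n))"
  unfolding sum3 by (auto simp: F_add F_embCl tr2 in3 set3)

lemma coef_zero: "k \<in> {1..3} \<Longrightarrow> (\<Sum>m\<in>{1..3}. emb (v m) ** Cl sc (sig m)) = 0 \<Longrightarrow> v k = 0"
proof -
  assume k: "k \<in> {1..3}" and h: "(\<Sum>m\<in>{1..3}. emb (v m) ** Cl sc (sig m)) = 0"
  have "F (sig k) 0 = 0" by (simp add: F_def trace_def)
  hence "v k * sc (of_nat CARD('n)) = 0" using F1[OF k, of v] h by simp
  hence "v k * sc (of_nat CARD('n)) * sc (1 / of_nat CARD('n)) = 0" by simp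
  thus "v k = 0" by (simp add: mult.assoc sc_inv)
qed

lemma dsum: "j \<in> {1..3} \<Longrightarrow> k \<in> {1..3} \<Longrightarrow> (\<Sum>l\<in>{1..3::nat}. \<Sum>m\<in>{1..3::nat}. if l = j \<and> m = k then f l m else 0) = (f j k :: 'b::comm_monoid_add)"
proof -
  assume "j \<in> {1..3}" "k \<in> {1..3}"
  have "(\<Sum>l\<in>{1..3::nat}. \<Sum>m\<in>{1..3::nat}. if l = j \<and> m = k then f l m else 0) = (\<Sum>l\<in>{1..3::nat}. if l = j then f l k else 0)"
    using \<open>k \<in> {1..3}\<close> by (intro sum.cong refl) (auto simp: if_distrib sum.delta' cong: if_cong)
  also have "\<dots> = f j k" using \<open>j \<in> {1..3}\<close> by (simp add: sum.delta')
  finally show ?thesis .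
qed

lemma F2: "j \<in> {1..3} \<Longrightarrow> k \<in> {1..3} \<Longrightarrow> j \<noteq> k \<Longrightarrow>
   F (sig k ** sig j) (\<Sum>l\<in>{1..3}. \<Sum>m\<in>{1..3}. emb (v l m) ** Cl sc (sig l ** sig m))
   = (v j k - v k j) * sc (of_nat CARD('n))"
proof -
  assume j: "j \<in> {1..3}" and k: "k \<in> {1..3}" and jk: "j \<noteq> k"
  have e: "F (sig k ** sig j) (emb x ** Cl sc (sig l ** sig m)) =
     x * sc (of_nat CARD('n) * ((if l = m \<and> k = j then 1 else 0) - (if l = k \<and> m = j then 1 else 0) + (if l = j \<and> m = k then 1 else 0)))"
    if "l \<in> {1..3}" "m \<in> {1..3}" for x l m
  proof -
    have "(sig l ** sig m) ** (sig k ** sig j) = sig l ** sig m ** sig k ** sig j" by (simp only: matrix_mul_assoc)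
    hence "F (sig k ** sig j) (emb x ** Cl sc (sig l ** sig m)) = x * sc (trace (sig l ** sig m ** sig k ** sig j))"
      using F_embCl[of "sig k ** sig j" x "sig l ** sig m"] by (simp only:)
    thus ?thesis by (simp only: tr4[OF that k j])
  qed
  have ex: "F (sig k ** sig j) (\<Sum>l\<in>{1..3}. \<Sum>m\<in>{1..3}. emb (v l m) ** Cl sc (sig l ** sig m)) =
     (\<Sum>l\<in>{1..3}. \<Sum>m\<in>{1..3}. v l m * sc (of_nat CARD('n) * ((if l = m \<and> k = j then 1 else 0) - (if l = k \<and> m = j then 1 else 0) + (if l = j \<and> m = k then 1 else 0))))"
    unfolding sum3 by (simp add: F_add e in3)
  have t: "v l m * sc (of_nat CARD('n) * ((if l = m \<and> k = j then 1 else 0) - (if l = k \<and> m = j then 1 else 0) + (if l = j \<and> m = k then 1 else 0)))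
     = (if l = j \<and> m = k then v l m * sc (of_nat CARD('n)) else 0) - (if l = k \<and> m = j then v l m * sc (of_nat CARD('n)) else 0)" for l m
    using jk by (auto simp: sc_neg)
  have "(\<Sum>l\<in>{1..3}. \<Sum>m\<in>{1..3}. v l m * sc (of_nat CARD('n) * ((if l = m \<and> k = j then 1 else 0) - (if l = k \<and> m = j then 1 else 0) + (if l = j \<and> m = k then 1 else 0))))
     = (\<Sum>l\<in>{1..3}. \<Sum>m\<in>{1..3}. (if l = j \<and> m = k then v l m * sc (of_nat CARD('n)) else 0)) - (\<Sum>l\<in>{1..3}. \<Sum>m\<in>{1..3}. (if l = k \<and> m = j then v l m * sc (of_nat CARD('n)) else 0))"
    by (simp only: t sum_subtractf)
  also have "\<dots> = v j k * sc (of_nat CARD('n)) - v k j * sc (of_nat CARD('n))"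
    using j k by (simp add: dsum)
  finally have "(\<Sum>l\<in>{1..3}. \<Sum>m\<in>{1..3}. v l m * sc (of_nat CARD('n) * ((if l = m \<and> k = j then 1 else 0) - (if l = k \<and> m = j then 1 else 0) + (if l = j \<and> m = k then 1 else 0))))
     = (v j k - v k j) * sc (of_nat CARD('n))" by (simp add: left_diff_distrib)
  with ex show ?thesis by simp
qed

lemma dy: "i \<in> {1..3} \<Longrightarrow> der i (yv ts m) = zv ts i m + wv ts i m"
proof (induction ts)
  case Nil thus ?case by (simp add: yv_def zv_def wv_def der_0)
next
  case (Cons t ts)
  thus ?case by (simp add: yv_def zv_def wv_def der_add der_mult algebra_simps)
qed

lemma comm_sign: "j \<in> {1..3} \<Longrightarrow> k \<in> {1..3} \<Longrightarrow> j \<noteq> k \<Longrightarrow>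
  \<exists>l\<in>{1..3}. \<exists>e::'a. (e = 1 \<or> e = -1) \<and> (\<forall>a. der j (der k a) - der k (der j a) = e * der l a)"
proof -
  assume "j \<in> {1..3}" "k \<in> {1..3}" "j \<noteq> k"
  hence "(j,k) \<in> {(1,2),(2,1),(2,3),(3,2),(3,1),(1,3)}" by auto
  moreover have "\<forall>a. der 1 (der 2 a) - der 2 (der 1 a) = - 1 * der 3 a" using comm(1) by (simp add: eq_neg_iff_add_eq_0)
  moreover have "\<forall>a. der 2 (der 1 a) - der 1 (der 2 a) = 1 * der 3 a" using comm(1) by (metis add.commute eq_neg_iff_add_eq_0 minus_diff_eq mult_1)
  moreover have "\<forall>a. der 2 (der 3 a) - der 3 (der 2 a) = - 1 * der 1 a" using comm(2) by (simp add: eq_neg_iff_add_eq_0)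
  moreover have "\<forall>a. der 3 (der 2 a) - der 2 (der 3 a) = 1 * der 1 a" using comm(2) by (metis add.commute eq_neg_iff_add_eq_0 minus_diff_eq mult_1)
  moreover have "\<forall>a. der 3 (der 1 a) - der 1 (der 3 a) = - 1 * der 2 a" using comm(3) by (simp add: eq_neg_iff_add_eq_0)
  moreover have "\<forall>a. der 1 (der 3 a) - der 3 (der 1 a) = 1 * der 2 a" using comm(3) by (metis add.commute eq_neg_iff_add_eq_0 minus_diff_eq mult_1)
  ultimately show ?thesis using in3 by blast
qed

lemma wdiff: "(e = 1 \<or> e = -1) \<Longrightarrow> (\<forall>a. der j (der k a) - der k (der j a) = e * der l a) \<Longrightarrow>
   wv ts j k - wv ts k j = e * yv ts l"
proof (induction ts)
  case Nil thus ?case by (simp add: wv_def yv_def)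
next
  case (Cons t ts)
  have "hd t * der j (der k (t ! 1)) - hd t * der k (der j (t ! 1)) = e * (hd t * der l (t ! 1))"
    using Cons.prems by (auto simp: right_diff_distrib[symmetric])
  with Cons show ?case by (simp add: wv_def yv_def algebra_simps)
qed

lemma junk: "X \<in> Junk sc der sig 2 \<Longrightarrow> j \<in> {1..3} \<Longrightarrow> k \<in> {1..3} \<Longrightarrow> j \<noteq> k \<Longrightarrow> F (sig k ** sig j) X = 0"
proof -
  assume X: "X \<in> Junk sc der sig 2" and j: "j \<in> {1..3}" and k: "k \<in> {1..3}" and jk: "j \<noteq> k"
  obtain ts where l2: "\<forall>t\<in>set ts. length t = 2" and p0: "PiForm sc der sig ts = 0" and Xd: "X = PiDForm sc der sig ts"
    using X unfolding Junk_def by blast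
  have y0: "yv ts m = 0" if "m \<in> {1..3}" for m
    using coef_zero[OF that] p0 PiForm_rep[OF l2] by simp
  obtain l e where l: "l \<in> {1..3}" and e: "e = 1 \<or> e = -1" and ce: "\<forall>a. der j (der k a) - der k (der j a) = e * der l a"
    using comm_sign[OF j k jk] by blast
  have wd: "wv ts j k - wv ts k j = 0" using wdiff[OF e ce] y0[OF l] by simp
  have zj: "zv ts j k = - wv ts j k" using dy[OF j, of ts k] y0[OF k] der_0[OF j] by (simp add: eq_neg_iff_add_eq_0)
  have zk: "zv ts k j = - wv ts k j" using dy[OF k, of ts j] y0[OF j] der_0[OF k] by (simp add: eq_neg_iff_add_eq_0)
  have "zv ts j k - zv ts k j = 0" using zj zk wd by (metis minus_diff_eq minus_diff_minus neg_equal_0_iff_equal)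
  thus ?thesis using F2[OF j k jk, of "zv ts"] Xd PiDForm_rep[OF l2] by simp
qed

lemma mult2_eq: "mult2 sc sig c = (\<Sum>j\<in>{1..3}. \<Sum>k\<in>{1..3}. emb (c j k) ** Cl sc (sig j ** sig k))"
  unfolding mult2_def by (simp add: Cl_emb)

lemma tors:
  assumes T: "torsionless sc der sig nab" and l2: "\<forall>t\<in>set ts. length t = 2"
    and j: "j \<in> {1..3}" and k: "k \<in> {1..3}" and jk: "j \<noteq> k"
  shows "nab (PiForm sc der sig ts) j k - nab (PiForm sc der sig ts) k j = zv ts k j - zv ts j k"
proof -
  let ?c = "nab (PiForm sc der sig ts)"
  have "mult2 sc sig ?c + PiDForm sc der sig ts \<in> Junk sc der sig 2"
    using T l2 unfolding torsionless_def by blast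
  hence "F (sig k ** sig j) (mult2 sc sig ?c + PiDForm sc der sig ts) = 0"
    by (rule junk[OF _ j k jk])
  hence "(?c j k - ?c k j) * sc (of_nat CARD('n)) + (zv ts j k - zv ts k j) * sc (of_nat CARD('n)) = 0"
    by (simp add: F_add mult2_eq PiDForm_rep[OF l2] F2[OF j k jk])
  hence "((?c j k - ?c k j) + (zv ts j k - zv ts k j)) * sc (of_nat CARD('n)) * sc (1 / of_nat CARD('n)) = 0"
    by (simp add: distrib_right)
  hence "(?c j k - ?c k j) + (zv ts j k - zv ts k j) = 0" by (simp add: mult.assoc sc_inv)
  thus ?thesis by (simp add: algebra_simps eq_neg_iff_add_eq_0)
qed

lemma unit:
  assumes U: "unitary sc der sig nab" and i: "i \<in> {1..3}" and j: "j \<in> {1..3}" and k: "k \<in> {1..3}"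
  shows "nab (ebase sc sig i) j k + nab (ebase sc sig j) i k = 0"
proof -
  have "Pi_g sc sig nab i j k = dg der i j k" using U i j k unfolding unitary_def by blast
  moreover have "dg der i j k = 0" using k by (simp add: dg_def gcan_def der_0 der_1)
  moreover have "Pi_g sc sig nab i j k = nab (ebase sc sig i) j k + nab (ebase sc sig j) i k"
    using i j unfolding Pi_g_def g_id_def sigma23_def tens_e_def gcan_def
    by (simp add: sum3 set3) (auto)
  ultimately show ?thesis by simp
qed

definition tv :: "nat \<Rightarrow> nat \<Rightarrow> nat \<Rightarrow> complex" where
  "tv i j k = (if (i, j, k) \<in> {(1,3,2), (2,1,3), (3,2,1)} then 1
      else if (i, j, k) \<in> {(1,2,3), (2,3,1), (3,1,2)} then - 1 else 0)"

lemma zv1: "zv [[x, y]] l m = der l x * der m y" by (simp add: zv_def)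
lemma yv1: "yv [[x, y]] m = x * der m y" by (simp add: yv_def)

lemma ebase_rep: "ebase sc sig i = (\<Sum>m\<in>{1..3}. emb (if m = i then 1 else 0) ** Cl sc (sig m))"
  if "i \<in> {1..3}"
  using that by (auto simp: sum3 set3 emb_1 emb_0 ebase_def)

lemma l2s: "\<forall>t\<in>set [[a, b]]. length t = 2" by simp

lemma eb1: "PiForm sc der sig [[st (S 2), S 3]] = ebase sc sig 1"
  unfolding PiForm_rep[OF l2s] ebase_rep[OF in3(1)] sum3 yv1 by (simp add: derS orth)
lemma eb2: "PiForm sc der sig [[st (S 1), S 3]] = ebase sc sig 2"
  unfolding PiForm_rep[OF l2s] ebase_rep[OF in3(2)] sum3 yv1 by (simp add: derS orth)
lemma eb3: "PiForm sc der sig [[st (S 2), S 1]] = ebase sc sig 3"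
  unfolding PiForm_rep[OF l2s] ebase_rep[OF in3(3)] sum3 yv1 by (simp add: derS orth)

lemma tor_gen:
  assumes T: "torsionless sc der sig nab" and e: "PiForm sc der sig [[x, y]] = ebase sc sig i"
    and h: "\<And>j k. (j, k) \<in> {(1,2),(2,1),(2,3),(3,2),(3,1),(1,3)} \<Longrightarrow> der k x * der j y - der j x * der k y = sc (tv i j k)"
    and j: "j \<in> {1..3}" and k: "k \<in> {1..3}"
    and tvd: "\<And>j. tv i j j = 0"
  shows "nab (ebase sc sig i) j k - nab (ebase sc sig i) k j = sc (tv i j k)"
proof (cases "j = k")
  case True thus ?thesis using tvd by simp
next
  case False
  have jk: "(j, k) \<in> {(1,2),(2,1),(2,3),(3,2),(3,1),(1,3)}" using j k False by auto
  have "nab (ebase sc sig i) j k - nab (ebase sc sig i) k j = zv [[x, y]] k j - zv [[x, y]] j k"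
    using tors[OF T _ j k False, of "[[x, y]]"] e by simp
  also have "\<dots> = sc (tv i j k)" unfolding zv1 by (rule h[OF jk])
  finally show ?thesis .
qed

lemma tv_diag: "tv i j j = 0" by (simp add: tv_def)

lemma h1: "(j, k) \<in> {(1,2),(2,1),(2,3),(3,2),(3,1),(1,3)} \<Longrightarrow>
  der k (st (S 2)) * der j (S 3) - der j (st (S 2)) * der k (S 3) = sc (tv 1 j k)"
  by (auto simp: der_st derS st_neg orth tv_def sc_neg)
lemma h2: "(j, k) \<in> {(1,2),(2,1),(2,3),(3,2),(3,1),(1,3)} \<Longrightarrow>
  der k (st (S 1)) * der j (S 3) - der j (st (S 1)) * der k (S 3) = sc (tv 2 j k)"
  by (auto simp: der_st derS st_neg orth tv_def sc_neg)
lemma h3: "(j, k) \<in> {(1,2),(2,1),(2,3),(3,2),(3,1),(1,3)} \<Longrightarrow>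
  der k (st (S 2)) * der j (S 1) - der j (st (S 2)) * der k (S 1) = sc (tv 3 j k)"
  by (auto simp: der_st derS st_neg orth tv_def sc_neg)

lemma tor_all:
  assumes T: "torsionless sc der sig nab" and i: "i \<in> {1..3}" and j: "j \<in> {1..3}" and k: "k \<in> {1..3}"
  shows "nab (ebase sc sig i) j k - nab (ebase sc sig i) k j = sc (tv i j k)"
proof -
  have "i = 1 \<or> i = 2 \<or> i = 3" using i by auto
  thus ?thesis
    using tor_gen[OF T eb1 h1 j k tv_diag] tor_gen[OF T eb2 h2 j k tv_diag] tor_gen[OF T eb3 h3 j k tv_diag]
    by auto
qed

lemma tvG: "i \<in> {1..3} \<Longrightarrow> j \<in> {1..3} \<Longrightarrow> k \<in> {1..3} \<Longrightarrow>
  tv i j k + tv k j i - tv j i k = Gamma0 i j k + Gamma0 i j k"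
  unfolding set3 by (elim insertE emptyE; simp add: tv_def Gamma0_def)

lemma final:
  assumes T: "torsionless sc der sig nab" and U: "unitary sc der sig nab"
  shows "\<forall>i\<in>{1..3}. \<forall>j\<in>{1..3}. \<forall>k\<in>{1..3}. nab (ebase sc sig i) j k = sc (Gamma0 i j k)"
proof (intro ballI)
  fix i j k :: nat assume i: "i \<in> {1..3}" and j: "j \<in> {1..3}" and k: "k \<in> {1..3}"
  define G where "G i j k = nab (ebase sc sig i) j k" for i j k
  have u: "G a b c = - G b a c" if "a \<in> {1..3}" "b \<in> {1..3}" "c \<in> {1..3}" for a b c
    using unit[OF U that] unfolding G_def by (simp add: eq_neg_iff_add_eq_0)
  have t: "G a b c - G a c b = sc (tv a b c)" if "a \<in> {1..3}" "b \<in> {1..3}" "c \<in> {1..3}" for a b c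
    using tor_all[OF T that] unfolding G_def .
  have "G i j k + G i j k = (G i j k - G i k j) + (G k j i - G k i j) - (G j i k - G j k i)"
    using u[OF k j i] u[OF k i j] u[OF j i k] by (simp add: algebra_simps)
  also have "\<dots> = sc (tv i j k + tv k j i - tv j i k)"
    using t[OF i j k] t[OF k j i] t[OF j i k] by (simp add: sc_add sc_diff)
  also have "tv i j k + tv k j i - tv j i k = Gamma0 i j k + Gamma0 i j k"
    using i j k by (rule tvG)
  finally have "G i j k + G i j k = sc (Gamma0 i j k) + sc (Gamma0 i j k)"
    by (simp only: sc_add)
  hence "(G i j k - sc (Gamma0 i j k)) + (G i j k - sc (Gamma0 i j k)) = 0"
    by (metis add_diff_add diff_self)
  hence "G i j k - sc (Gamma0 i j k) = 0" by (rule two_cancel)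
  thus "nab (ebase sc sig i) j k = sc (Gamma0 i j k)" unfolding G_def by simp
qed

end

theorem mainTheorem8:
  fixes sc :: "complex \<Rightarrow> 'a::ring_1"
    and st :: "'a \<Rightarrow> 'a"
    and S :: "nat \<Rightarrow> 'a"
    and der :: "nat \<Rightarrow> 'a \<Rightarrow> 'a"
    and sig :: "nat \<Rightarrow> complex^'n::finite^'n"
    and nab :: "'a^'n^'n \<Rightarrow> nat \<Rightarrow> nat \<Rightarrow> 'a"
  assumes "cuntz3_algebra sc st S"
    and "so3_derivations sc st S der"
    and "clifford3 sig"
    and "is_connection sc der sig nab"
    and "torsionless sc der sig nab"
    and "unitary sc der sig nab"
  shows "\<forall>i\<in>{1..3}. \<forall>j\<in>{1..3}. \<forall>k\<in>{1..3}. nab (ebase sc sig i) j k = sc (Gamma0 i j k)"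
proof -
  interpret cz sc st S der sig using assms(1-3) by unfold_locales
  show ?thesis by (rule final[OF assms(5) assms(6)])
qed

end
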